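(* Let $S''=\{UD-DU : U \text{ an upper prime},\ D \text{ a lower prime}\}$. Then $S''$ generates the ideal $\mathcal{J}$ (as a two-sided ideal of $\mathcal{A}$).
   Context: $\mathcal{A}$ is the free associative $\mathbb{C}$-algebra on noncommuting generators $L,R$; words are finite products of these letters. A word is balanced if it contains equally many $L$'s and $R$'s. $\mathcal{J}$ is the two-sided ideal of $\mathcal{A}$ generated by $S=\{FG-GF : F,G \text{ nonempty balanced words}\}$. A word is prime if it is nonempty, balanced, and cannot be written as a product of two nonempty balanced words. For a balanced word $W=a_1\cdots a_n$, $e_k(W)=\sum_{i=1}^k\overline{a_i}$ ($0\le k\le n$) with $\overline{R}=1$, $\overline{L}=-1$. A prime $P$ of length $n$ is an upper prime if $e_k(P)>0$ for $1\le k\le n-1$, and a lower prime if $e_k(P)<0$ for $1\le k\le n-1$. *)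

theory Defs
  imports Complex_Main
begin

datatype letter = L | R
type_synonym word = "letter list"

text \<open>The free associative algebra over the complex numbers on L, R:
  finitely supported coefficient functions on words.\<close>
type_synonym alg = "word \<Rightarrow> complex"

definition carrierA :: "alg set" where
  "carrierA = {f. finite {w. f w \<noteq> 0}}"

definition amult :: "alg \<Rightarrow> alg \<Rightarrow> alg" where
  "amult f g = (\<lambda>w. \<Sum>(u,v)\<in>{(u,v). u @ v = w}. f u * g v)"

definition aadd :: "alg \<Rightarrow> alg \<Rightarrow> alg" where
  "aadd f g = (\<lambda>w. f w + g w)"

definition asub :: "alg \<Rightarrow> alg \<Rightarrow> alg" where
  "asub f g = (\<lambda>w. f w - g w)"

definition azero :: alg where
  "azero = (\<lambda>w. 0)"

definition mon :: "word \<Rightarrow> alg" where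
  "mon w = (\<lambda>u. if u = w then 1 else 0)"

inductive_set gen_ideal :: "alg set \<Rightarrow> alg set" for S :: "alg set" where
  gen_zero: "azero \<in> gen_ideal S"
| gen_base: "s \<in> S \<Longrightarrow> s \<in> gen_ideal S"
| gen_add: "x \<in> gen_ideal S \<Longrightarrow> y \<in> gen_ideal S \<Longrightarrow> aadd x y \<in> gen_ideal S"
| gen_lmult: "a \<in> carrierA \<Longrightarrow> x \<in> gen_ideal S \<Longrightarrow> amult a x \<in> gen_ideal S"
| gen_rmult: "a \<in> carrierA \<Longrightarrow> x \<in> gen_ideal S \<Longrightarrow> amult x a \<in> gen_ideal S"

definition balanced :: "word \<Rightarrow> bool" where
  "balanced w \<longleftrightarrow> count_list w L = count_list w R"

definition prime_word :: "word \<Rightarrow> bool" where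
  "prime_word w \<longleftrightarrow> w \<noteq> [] \<and> balanced w \<and>
     \<not> (\<exists>u v. u \<noteq> [] \<and> v \<noteq> [] \<and> balanced u \<and> balanced v \<and> w = u @ v)"

fun bar :: "letter \<Rightarrow> int" where
  "bar R = 1" | "bar L = -1"

definition ek :: "nat \<Rightarrow> word \<Rightarrow> int" where
  "ek k w = (\<Sum>i<k. bar (w ! i))"

definition upper_prime :: "word \<Rightarrow> bool" where
  "upper_prime P \<longleftrightarrow> prime_word P \<and> (\<forall>k. 1 \<le> k \<and> k \<le> length P - 1 \<longrightarrow> ek k P > 0)"

definition lower_prime :: "word \<Rightarrow> bool" where
  "lower_prime P \<longleftrightarrow> prime_word P \<and> (\<forall>k. 1 \<le> k \<and> k \<le> length P - 1 \<longrightarrow> ek k P < 0)"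

definition commS :: "alg set" where
  "commS = {asub (amult (mon F) (mon G)) (amult (mon G) (mon F)) | F G.
             F \<noteq> [] \<and> G \<noteq> [] \<and> balanced F \<and> balanced G}"

definition J :: "alg set" where
  "J = gen_ideal commS"

definition S'' :: "alg set" where
  "S'' = {asub (amult (mon U) (mon D)) (amult (mon D) (mon U)) | U D.
             upper_prime U \<and> lower_prime D}"

end

theory Submission
  imports Defs
begin

lemma fin_split: "finite {(u,v). u @ v = (w::word)}"
proof -
  have "{(u,v). u @ v = w} \<subseteq> (\<lambda>i. (take i w, drop i w)) ` {..length w}"
  proof
    fix p assume "p \<in> {(u,v). u @ v = w}"
    then obtain u v where p: "p = (u,v)" "u @ v = w" by auto
    then show "p \<in> (\<lambda>i. (take i w, drop i w)) ` {..length w}"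
      by (intro image_eqI[where x="length u"]) auto
  qed
  then show ?thesis by (rule finite_subset) auto
qed

lemma amult_delta_left:
  "amult (\<lambda>u. if u = a then k else 0) f =
     (\<lambda>w. if take (length a) w = a then k * f (drop (length a) w) else 0)"
proof
  fix w
  have "amult (\<lambda>u. if u = a then k else 0) f w =
        (\<Sum>p\<in>{(u,v). u @ v = w}. if p = (a, drop (length a) w) then k * f (snd p) else 0)"
    unfolding amult_def
    by (rule sum.cong) (auto split: if_splits)
  also have "\<dots> = (if (a, drop (length a) w) \<in> {(u,v). u @ v = w} then k * f (drop (length a) w) else 0)"
    by (subst sum.delta[OF fin_split]) simp
  also have "\<dots> = (if take (length a) w = a then k * f (drop (length a) w) else 0)"
    by (metis (mono_tags, lifting) append_eq_conv_conj case_prod_conv mem_Collect_eq)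
  finally show "amult (\<lambda>u. if u = a then k else 0) f w =
     (if take (length a) w = a then k * f (drop (length a) w) else 0)" .
qed

lemma amult_mon_mon: "amult (mon u) (mon v) = mon (u @ v)"
proof -
  have "amult (mon u) (mon v) = amult (\<lambda>x. if x = u then 1 else 0) (mon v)"
    by (simp add: mon_def)
  also have "\<dots> = mon (u @ v)"
    unfolding amult_delta_left
    by (auto simp: mon_def fun_eq_iff) (metis append_take_drop_id)+
  finally show ?thesis .
qed

lemma amult_asub_left: "amult (asub f g) h = asub (amult f h) (amult g h)"
  unfolding amult_def asub_def
  by (auto simp: fun_eq_iff left_diff_distrib sum_subtractf split_def)

lemma amult_asub_right: "amult h (asub f g) = asub (amult h f) (amult h g)"
  unfolding amult_def asub_def
  by (auto simp: fun_eq_iff right_diff_distrib sum_subtractf split_def)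

lemma mon_carrier: "mon a \<in> carrierA"
proof -
  have "{w. mon a w \<noteq> 0} = {a}" by (auto simp: mon_def)
  then show ?thesis by (simp add: carrierA_def)
qed

definition cneg :: alg where "cneg = (\<lambda>u. if u = [] then -1 else 0)"

lemma cneg_carrier: "cneg \<in> carrierA"
proof -
  have "{w. cneg w \<noteq> 0} = {[]}" by (auto simp: cneg_def)
  then show ?thesis by (simp add: carrierA_def)
qed

lemma amult_cneg: "amult cneg f = (\<lambda>w. - f w)"
  unfolding cneg_def amult_delta_left by simp

inductive wcong :: "word \<Rightarrow> word \<Rightarrow> bool" where
  wstep: "upper_prime U \<Longrightarrow> lower_prime D \<Longrightarrow> wcong (a @ U @ D @ b) (a @ D @ U @ b)"
| wrefl: "wcong x x"
| wsym: "wcong x y \<Longrightarrow> wcong y x"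
| wtrans: "wcong x y \<Longrightarrow> wcong y z \<Longrightarrow> wcong x z"

lemma wcong_ctx: "wcong x y \<Longrightarrow> wcong (a @ x @ b) (a @ y @ b)"
proof (induction rule: wcong.induct)
  case (wstep U D a' b')
  then show ?case using wcong.wstep[of U D "a @ a'" "b' @ b"] by simp
next
  case (wrefl x)
  show ?case by (rule wcong.wrefl)
next
  case (wsym x y)
  then show ?case by (metis wcong.wsym)
next
  case (wtrans x y z)
  then show ?case by (metis wcong.wtrans)
qed

lemma wcong_ideal: "wcong x y \<Longrightarrow> asub (mon x) (mon y) \<in> gen_ideal S''"
proof (induction rule: wcong.induct)
  case (wstep U D a b)
  let ?s = "asub (amult (mon U) (mon D)) (amult (mon D) (mon U))"
  have s: "?s \<in> gen_ideal S''" using wstep by (intro gen_base) (auto simp: S''_def)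
  have "amult (mon a) (amult ?s (mon b)) \<in> gen_ideal S''"
    by (intro gen_lmult gen_rmult mon_carrier s)
  moreover have "amult (mon a) (amult ?s (mon b)) = asub (mon (a @ U @ D @ b)) (mon (a @ D @ U @ b))"
    by (simp add: amult_asub_left amult_asub_right amult_mon_mon)
  ultimately show ?case by simp
next
  case (wrefl x)
  have "asub (mon x) (mon x) = azero" by (simp add: asub_def azero_def)
  then show ?case using gen_zero by simp
next
  case (wsym x y)
  have "amult cneg (asub (mon x) (mon y)) \<in> gen_ideal S''"
    by (intro gen_lmult cneg_carrier wsym)
  moreover have "amult cneg (asub (mon x) (mon y)) = asub (mon y) (mon x)"
    by (simp add: amult_cneg asub_def fun_eq_iff)
  ultimately show ?case by simp
next
  case (wtrans x y z)
  have "aadd (asub (mon x) (mon y)) (asub (mon y) (mon z)) \<in> gen_ideal S''"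
    by (intro gen_add wtrans)
  moreover have "aadd (asub (mon x) (mon y)) (asub (mon y) (mon z)) = asub (mon x) (mon z)"
    by (simp add: aadd_def asub_def fun_eq_iff)
  ultimately show ?case by simp
qed


definition ht :: "word \<Rightarrow> int" where
  "ht w = int (count_list w R) - int (count_list w L)"

lemma balanced_ht: "balanced w \<longleftrightarrow> ht w = 0"
  by (auto simp: balanced_def ht_def)

lemma ht_append[simp]: "ht (u @ v) = ht u + ht v"
  by (simp add: ht_def)

lemma ht_Nil[simp]: "ht [] = 0" by (simp add: ht_def)

lemma ht_Cons[simp]: "ht (x # w) = bar x + ht w"
  by (cases x) (simp_all add: ht_def)

lemma ek_take: "k \<le> length w \<Longrightarrow> ek k w = ht (take k w)"
proof (induction k)
  case 0
  then show ?case by (simp add: ek_def)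
next
  case (Suc k)
  then have "take (Suc k) w = take k w @ [w ! k]"
    by (simp add: take_Suc_conv_app_nth)
  then show ?case using Suc by (simp add: ek_def)
qed

lemma bar_ge: "bar x \<ge> -1" by (cases x) auto
lemma bar_le: "bar x \<le> 1" by (cases x) auto

lemma prime_upper:
  assumes p: "prime_word F" and h: "hd F = R"
  shows "upper_prime F \<and> (\<exists>Y. F = R # Y @ [L] \<and> balanced Y)"
proof -
  have ne: "F \<noteq> []" and bal: "ht F = 0"
    using p by (auto simp: prime_word_def balanced_ht)
  have pos: "1 \<le> k \<Longrightarrow> k < length F \<Longrightarrow> ht (take k F) > 0" for k
  proof (induction k)
    case 0 then show ?case by simp
  next
    case (Suc k)
    show ?case
    proof (cases "k = 0")
      case True
      then show ?thesis using ne h by (cases F) auto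
    next
      case False
      then have ih: "ht (take k F) > 0" using Suc by simp
      have tk: "take (Suc k) F = take k F @ [F ! k]"
        using Suc by (simp add: take_Suc_conv_app_nth)
      have ge: "ht (take (Suc k) F) \<ge> 0" using ih bar_ge[of "F ! k"] tk by simp
      have "ht (take (Suc k) F) \<noteq> 0"
      proof
        assume z: "ht (take (Suc k) F) = 0"
        have "F = take (Suc k) F @ drop (Suc k) F" by simp
        moreover have "ht (drop (Suc k) F) = 0"
          using z bal by (metis add_0 append_take_drop_id ht_append)
        moreover have "take (Suc k) F \<noteq> []" "drop (Suc k) F \<noteq> []" using Suc ne by auto
        ultimately show False using p z unfolding prime_word_def balanced_ht by blast
      qed
      then show ?thesis using ge by simp
    qed
  qed
  have up: "upper_prime F"
    unfolding upper_prime_def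
  proof (intro conjI allI impI)
    show "prime_word F" by fact
    fix k assume k: "1 \<le> k \<and> k \<le> length F - 1"
    then have "k < length F" using ne by (cases F) auto
    then show "ek k F > 0" using pos k ek_take by simp
  qed
  obtain F' where F: "F = R # F'" using ne h by (cases F) auto
  have "F' \<noteq> []" using F bal by auto
  then obtain Y x where F': "F' = Y @ [x]" by (metis rev_exhaust)
  have "ht (take (length Y + 1) F) > 0" using pos[of "length Y + 1"] F F' by simp
  then have "ht (R # Y) > 0" using F F' by simp
  moreover have "ht (R # Y) + bar x = 0" using bal F F' by simp
  ultimately have "bar x < 0" by simp
  then have x: "x = L" by (cases x) auto
  then have "balanced Y" using bal F F' by (simp add: balanced_ht)
  then show ?thesis using up F F' x by auto
qed

lemma prime_lower:
  assumes p: "prime_word F" and h: "hd F = L"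
  shows "lower_prime F \<and> (\<exists>Y. F = L # Y @ [R] \<and> balanced Y)"
proof -
  have ne: "F \<noteq> []" and bal: "ht F = 0"
    using p by (auto simp: prime_word_def balanced_ht)
  have pos: "1 \<le> k \<Longrightarrow> k < length F \<Longrightarrow> ht (take k F) < 0" for k
  proof (induction k)
    case 0 then show ?case by simp
  next
    case (Suc k)
    show ?case
    proof (cases "k = 0")
      case True
      then show ?thesis using ne h by (cases F) auto
    next
      case False
      then have ih: "ht (take k F) < 0" using Suc by simp
      have tk: "take (Suc k) F = take k F @ [F ! k]"
        using Suc by (simp add: take_Suc_conv_app_nth)
      have ge: "ht (take (Suc k) F) \<le> 0" using ih bar_le[of "F ! k"] tk by simp
      have "ht (take (Suc k) F) \<noteq> 0"
      proof
        assume z: "ht (take (Suc k) F) = 0"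
        have "F = take (Suc k) F @ drop (Suc k) F" by simp
        moreover have "ht (drop (Suc k) F) = 0"
          using z bal by (metis add_0 append_take_drop_id ht_append)
        moreover have "take (Suc k) F \<noteq> []" "drop (Suc k) F \<noteq> []" using Suc ne by auto
        ultimately show False using p z unfolding prime_word_def balanced_ht by blast
      qed
      then show ?thesis using ge by simp
    qed
  qed
  have up: "lower_prime F"
    unfolding lower_prime_def
  proof (intro conjI allI impI)
    show "prime_word F" by fact
    fix k assume k: "1 \<le> k \<and> k \<le> length F - 1"
    then have "k < length F" using ne by (cases F) auto
    then show "ek k F < 0" using pos k ek_take by simp
  qed
  obtain F' where F: "F = L # F'" using ne h by (cases F) auto
  have "F' \<noteq> []" using F bal by auto
  then obtain Y x where F': "F' = Y @ [x]" by (metis rev_exhaust)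
  have "ht (take (length Y + 1) F) < 0" using pos[of "length Y + 1"] F F' by simp
  then have "ht (L # Y) < 0" using F F' by simp
  moreover have "ht (L # Y) + bar x = 0" using bal F F' by simp
  ultimately have "bar x > 0" by simp
  then have x: "x = R" by (cases x) auto
  then have "balanced Y" using bal F F' by (simp add: balanced_ht)
  then show ?thesis using up F F' x by auto
qed


lemma prime_cases:
  assumes "prime_word F"
  obtains "upper_prime F" "\<exists>Y. F = R # Y @ [L] \<and> balanced Y"
        | "lower_prime F" "\<exists>Y. F = L # Y @ [R] \<and> balanced Y"
  using prime_upper[OF assms] prime_lower[OF assms] by (cases "hd F") auto

lemma main_comm: "balanced F \<Longrightarrow> balanced G \<Longrightarrow> wcong (F @ G) (G @ F)"
proof (induction "length F + length G" arbitrary: F G rule: less_induct)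
  case less
  show ?case
  proof (cases "F = [] \<or> G = []")
    case True
    then show ?thesis by (auto intro: wrefl)
  next
    case False
    then have Fne: "F \<noteq> []" and Gne: "G \<noteq> []" by auto
    show ?thesis
    proof (cases "prime_word F")
      case False
      then obtain u v where uv: "u \<noteq> []" "v \<noteq> []" "balanced u" "balanced v" "F = u @ v"
        using Fne less.prems unfolding prime_word_def by blast
      have c1: "wcong (v @ G) (G @ v)" using less.hyps[of v G] uv less.prems by simp
      have c2: "wcong (u @ G) (G @ u)" using less.hyps[of u G] uv less.prems by simp
      have d1: "wcong (u @ v @ G) (u @ G @ v)" using wcong_ctx[OF c1, of u "[]"] by simp
      have d2: "wcong (u @ G @ v) (G @ u @ v)" using wcong_ctx[OF c2, of "[]" v] by simp
      show ?thesis using wtrans[OF d1 d2] uv by simp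
    next
      case pF: True
      show ?thesis
      proof (cases "prime_word G")
        case False
        then obtain u v where uv: "u \<noteq> []" "v \<noteq> []" "balanced u" "balanced v" "G = u @ v"
          using Gne less.prems unfolding prime_word_def by blast
        have c1: "wcong (F @ v) (v @ F)" using less.hyps[of F v] uv less.prems by simp
        have c2: "wcong (F @ u) (u @ F)" using less.hyps[of F u] uv less.prems by simp
        have d1: "wcong (F @ u @ v) (u @ F @ v)" using wcong_ctx[OF c2, of "[]" v] by simp
        have d2: "wcong (u @ F @ v) (u @ v @ F)" using wcong_ctx[OF c1, of u "[]"] by simp
        show ?thesis using wtrans[OF d1 d2] uv by simp
      next
        case pG: True
        show ?thesis
        proof (cases rule: prime_cases[OF pF])
          case uF: 1
          show ?thesis
          proof (cases rule: prime_cases[OF pG])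
            case uG: 1
            obtain Y1 where Y1: "F = R # Y1 @ [L]" "balanced Y1" using uF by blast
            obtain Y2 where Y2: "G = R # Y2 @ [L]" "balanced Y2" using uG by blast
            have bLR: "balanced [L,R]" by (simp add: balanced_def)
            have h1: "wcong ([L,R] @ Y2) (Y2 @ [L,R])"
              using less.hyps[of "[L,R]" Y2] bLR Y1 Y2 by simp
            have h2: "wcong (Y1 @ Y2) (Y2 @ Y1)"
              using less.hyps[of Y1 Y2] Y1 Y2 by simp
            have h3: "wcong ([L,R] @ Y1) (Y1 @ [L,R])"
              using less.hyps[of "[L,R]" Y1] bLR Y1 Y2 by simp
            have e1: "wcong (F @ G) (R # Y1 @ Y2 @ [L,R,L])"
              using wcong_ctx[OF h1, of "R # Y1" "[L]"] Y1 Y2 by simp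
            have e2: "wcong (R # Y1 @ Y2 @ [L,R,L]) (R # Y2 @ Y1 @ [L,R,L])"
              using wcong_ctx[OF h2, of "[R]" "[L,R,L]"] by simp
            have e3: "wcong (G @ F) (R # Y2 @ Y1 @ [L,R,L])"
              using wcong_ctx[OF h3, of "R # Y2" "[L]"] Y1 Y2 by simp
            show ?thesis by (meson e1 e2 e3 wsym wtrans)
          next
            case lG: 2
            show ?thesis using wstep[of F G "[]" "[]"] uF lG by simp
          qed
        next
          case lF: 2
          show ?thesis
          proof (cases rule: prime_cases[OF pG])
            case uG: 1
            show ?thesis using wstep[of G F "[]" "[]"] lF uG by (simp add: wsym)
          next
            case lG: 2
            obtain Y1 where Y1: "F = L # Y1 @ [R]" "balanced Y1" using lF by blast
            obtain Y2 where Y2: "G = L # Y2 @ [R]" "balanced Y2" using lG by blast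
            have bRL: "balanced [R,L]" by (simp add: balanced_def)
            have h1: "wcong ([R,L] @ Y2) (Y2 @ [R,L])"
              using less.hyps[of "[R,L]" Y2] bRL Y1 Y2 by simp
            have h2: "wcong (Y1 @ Y2) (Y2 @ Y1)"
              using less.hyps[of Y1 Y2] Y1 Y2 by simp
            have h3: "wcong ([R,L] @ Y1) (Y1 @ [R,L])"
              using less.hyps[of "[R,L]" Y1] bRL Y1 Y2 by simp
            have e1: "wcong (F @ G) (L # Y1 @ Y2 @ [R,L,R])"
              using wcong_ctx[OF h1, of "L # Y1" "[R]"] Y1 Y2 by simp
            have e2: "wcong (L # Y1 @ Y2 @ [R,L,R]) (L # Y2 @ Y1 @ [R,L,R])"
              using wcong_ctx[OF h2, of "[L]" "[R,L,R]"] by simp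
            have e3: "wcong (G @ F) (L # Y2 @ Y1 @ [R,L,R])"
              using wcong_ctx[OF h3, of "L # Y2" "[R]"] Y1 Y2 by simp
            show ?thesis by (meson e1 e2 e3 wsym wtrans)
          qed
        qed
      qed
    qed
  qed
qed

lemma commS_sub: "commS \<subseteq> gen_ideal S''"
proof
  fix s assume "s \<in> commS"
  then obtain F G where s: "s = asub (amult (mon F) (mon G)) (amult (mon G) (mon F))"
    and b: "balanced F" "balanced G" unfolding commS_def by blast
  then show "s \<in> gen_ideal S''"
    using wcong_ideal[OF main_comm[OF b]] by (simp add: amult_mon_mon)
qed

lemma gen_ideal_mono_sub:
  assumes T: "T \<subseteq> gen_ideal S" and x: "x \<in> gen_ideal T"
  shows "x \<in> gen_ideal S"
  using x
proof (induction x rule: gen_ideal.induct)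
  case gen_zero then show ?case by (rule gen_ideal.gen_zero)
next
  case (gen_base s) then show ?case using T by blast
next
  case (gen_add x y) then show ?case by (simp add: gen_ideal.gen_add)
next
  case (gen_lmult a x) then show ?case by (simp add: gen_ideal.gen_lmult)
next
  case (gen_rmult a x) then show ?case by (simp add: gen_ideal.gen_rmult)
qed

lemma S''_sub: "S'' \<subseteq> gen_ideal commS"
proof
  fix s assume "s \<in> S''"
  then obtain U D where s: "s = asub (amult (mon U) (mon D)) (amult (mon D) (mon U))"
    and "upper_prime U" "lower_prime D" unfolding S''_def by blast
  then have "U \<noteq> [] \<and> D \<noteq> [] \<and> balanced U \<and> balanced D"
    by (auto simp: upper_prime_def lower_prime_def prime_word_def)
  then have "s \<in> commS" using s unfolding commS_def by blast
  then show "s \<in> gen_ideal commS" by (rule gen_base)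
qed

theorem proposition5p3:
  shows "gen_ideal S'' = J"
  unfolding J_def
  using gen_ideal_mono_sub[OF commS_sub] gen_ideal_mono_sub[OF S''_sub] by blast

end
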